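(* Let $\mathcal{G}$ be a multi-layer graph with $l$ layers, $d,k\in\mathbb{N}$ with $k\ge1$, and $\mathcal{R}$ a collection of exactly $k$ subsets of $V(\mathcal{G})$. Let $L\subseteq\{1,\dots,l\}$ and $j>\max(L)$. If $|\mathsf{Cov}((\mathcal{R}-\{C^*(\mathcal{R})\})\cup\{C^d_{L\cup\{j\}}(\mathcal{G})\})|<(1+\frac1k)|\mathsf{Cov}(\mathcal{R})|$, then for every $L'$ with $L\subseteq L'\subseteq\{1,\dots,l\}$, $|\mathsf{Cov}((\mathcal{R}-\{C^*(\mathcal{R})\})\cup\{C^d_{L'\cup\{j\}}(\mathcal{G})\})|<(1+\frac1k)|\mathsf{Cov}(\mathcal{R})|$.
   Context: A multi-layer graph $\mathcal{G}=(V,E_1,\dots,E_l)$ consists of a finite vertex set $V$ and edge sets $E_i$ of simple undirected graphs $G_i=(V,E_i)$. A graph is $d$-dense if every vertex has degree at least $d$; the $d$-coherent core $C^d_L(\mathcal{G})$ is the unique maximal $S\subseteq V$ such that the induced subgraph $G_i[S]$ is $d$-dense for all $i\in L$. $\max(\emptyset)=-\infty$. For a collection $\mathcal{R}$ of sets, $\mathsf{Cov}(\mathcal{R})=\bigcup_{R\in\mathcal{R}}R$; for $C'\in\mathcal{R}$, $\Delta(\mathcal{R},C')=C'-\mathsf{Cov}(\mathcal{R}-\{C'\})$; $C^*(\mathcal{R})$ is a fixed element of $\mathcal{R}$ minimizing $|\Delta(\mathcal{R},C')|$. *)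

theory Defs
  imports Complex_Main
begin

definition multilayer_graph :: "'v set \<Rightarrow> nat \<Rightarrow> (nat \<Rightarrow> 'v set set) \<Rightarrow> bool" where
  "multilayer_graph V l E \<longleftrightarrow> finite V \<and>
     (\<forall>i\<in>{1..l}. \<forall>e\<in>E i. e \<subseteq> V \<and> card e = 2)"

definition induced_degree :: "'v set set \<Rightarrow> 'v set \<Rightarrow> 'v \<Rightarrow> nat" where
  "induced_degree Ei S v = card {u \<in> S. {v, u} \<in> Ei}"

definition dense_induced :: "nat \<Rightarrow> 'v set set \<Rightarrow> 'v set \<Rightarrow> bool" where
  "dense_induced d Ei S \<longleftrightarrow> (\<forall>v\<in>S. induced_degree Ei S v \<ge> d)"

definition coherent_core :: "'v set \<Rightarrow> (nat \<Rightarrow> 'v set set) \<Rightarrow> nat \<Rightarrow> nat set \<Rightarrow> 'v set" where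
  "coherent_core V E d L = (GREATEST S. S \<subseteq> V \<and> (\<forall>i\<in>L. dense_induced d (E i) S))"

definition Cov :: "'v set set \<Rightarrow> 'v set" where
  "Cov R = \<Union>R"

definition Delta :: "'v set set \<Rightarrow> 'v set \<Rightarrow> 'v set" where
  "Delta R C' = C' - Cov (R - {C'})"

definition Cstar :: "'v set set \<Rightarrow> 'v set" where
  "Cstar R = (SOME C. C \<in> R \<and> (\<forall>C'\<in>R. card (Delta R C) \<le> card (Delta R C')))"

end

theory Submission
  imports Defs
begin

lemma core_eq:
  assumes fin: "finite V"
  shows "coherent_core V E d L = \<Union>{S. S \<subseteq> V \<and> (\<forall>i\<in>L. dense_induced d (E i) S)}"
proof -
  let ?F = "{S. S \<subseteq> V \<and> (\<forall>i\<in>L. dense_induced d (E i) S)}"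
  have sub: "\<Union>?F \<subseteq> V" by blast
  have dense: "\<forall>i\<in>L. dense_induced d (E i) (\<Union>?F)"
  proof (intro ballI)
    fix i assume i: "i \<in> L"
    show "dense_induced d (E i) (\<Union>?F)"
    proof (rule dense_induced_def[THEN iffD2], intro ballI)
      fix v assume "v \<in> \<Union>?F"
      then obtain S where S: "S \<in> ?F" "v \<in> S" by blast
      have "d \<le> induced_degree (E i) S v" using S i by (auto simp: dense_induced_def)
      also have "\<dots> \<le> induced_degree (E i) (\<Union>?F) v"
        unfolding induced_degree_def
      proof (rule card_mono)
        show "finite {u \<in> \<Union>?F. {v, u} \<in> E i}"
          by (rule finite_subset[OF _ fin]) (use sub in auto)
        show "{u \<in> S. {v, u} \<in> E i} \<subseteq> {u \<in> \<Union>?F. {v, u} \<in> E i}"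
          using S(1) by auto
      qed
      finally show "d \<le> induced_degree (E i) (\<Union>?F) v" .
    qed
  qed
  show ?thesis unfolding coherent_core_def
  proof (rule Greatest_equality)
    show "\<Union>?F \<subseteq> V \<and> (\<forall>i\<in>L. dense_induced d (E i) (\<Union>?F))" using sub dense by simp
    fix y assume "y \<subseteq> V \<and> (\<forall>i\<in>L. dense_induced d (E i) y)"
    then have "y \<in> ?F" by simp
    then show "y \<le> \<Union>?F" by (rule Union_upper)
  qed
qed

theorem lemma4:
  fixes V :: "'v set" and l :: nat and E :: "nat \<Rightarrow> 'v set set"
    and d k j :: nat and R :: "'v set set" and L :: "nat set"
  assumes G: "multilayer_graph V l E"
    and k: "k \<ge> 1"
    and R: "card R = k" "\<forall>C\<in>R. C \<subseteq> V"
    and L: "L \<subseteq> {1..l}"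
    and j: "j \<in> {1..l}" "\<forall>i\<in>L. i < j"
    and hyp: "real (card (Cov ((R - {Cstar R}) \<union> {coherent_core V E d (L \<union> {j})})))
              < (1 + 1 / real k) * real (card (Cov R))"
  shows "\<forall>L'. L \<subseteq> L' \<and> L' \<subseteq> {1..l} \<longrightarrow>
           real (card (Cov ((R - {Cstar R}) \<union> {coherent_core V E d (L' \<union> {j})})))
              < (1 + 1 / real k) * real (card (Cov R))"
proof (intro allI impI)
  fix L' assume L': "L \<subseteq> L' \<and> L' \<subseteq> {1..l}"
  have fin: "finite V" using G by (simp add: multilayer_graph_def)
  have cs: "coherent_core V E d (L' \<union> {j}) \<subseteq> coherent_core V E d (L \<union> {j})"
    unfolding core_eq[OF fin] using L' by (intro Union_mono) auto
  have cv: "coherent_core V E d (L \<union> {j}) \<subseteq> V"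
    unfolding core_eq[OF fin] by auto
  have "Cov ((R - {Cstar R}) \<union> {coherent_core V E d (L' \<union> {j})})
        \<subseteq> Cov ((R - {Cstar R}) \<union> {coherent_core V E d (L \<union> {j})})"
    unfolding Cov_def using cs by auto
  moreover have "finite (Cov ((R - {Cstar R}) \<union> {coherent_core V E d (L \<union> {j})}))"
    apply (rule finite_subset[OF _ fin]) unfolding Cov_def using cv R(2) by auto
  ultimately have "card (Cov ((R - {Cstar R}) \<union> {coherent_core V E d (L' \<union> {j})}))
        \<le> card (Cov ((R - {Cstar R}) \<union> {coherent_core V E d (L \<union> {j})}))"
    by (rule card_mono[rotated])
  then show "real (card (Cov ((R - {Cstar R}) \<union> {coherent_core V E d (L' \<union> {j})})))
              < (1 + 1 / real k) * real (card (Cov R))" using hyp by linarith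
qed

end
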